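(* Let $k\ge 1$. If a bar $k$-visibility graph is triangle-free, then it is a disjoint union of caterpillars.
   Context: A bar $k$-visibility representation is a finite collection of pairwise disjoint closed horizontal line segments (bars) in the plane; two bars are joined by a line of sight if there is a vertical segment with endpoints on the two bars intersecting at most $k$ other bars. The bar $k$-visibility graph has one vertex per bar, two vertices adjacent iff their bars are joined by a line of sight. A caterpillar is a tree in which all vertices are within distance one of a central path. *)

theory Defs
  imports Main "HOL-Library.Disjoint_Sets" Complex_Main
begin

definition bar_rep :: "'a set \<Rightarrow> ('a \<Rightarrow> real) \<Rightarrow> ('a \<Rightarrow> real) \<Rightarrow> ('a \<Rightarrow> real) \<Rightarrow> bool" where
  "bar_rep V lft rgt hgt \<longleftrightarrow> finite V \<and> (\<forall>i\<in>V. lft i < rgt i) \<and>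
     (\<forall>i\<in>V. \<forall>j\<in>V. i \<noteq> j \<longrightarrow>
        ({lft i..rgt i} \<times> {hgt i}) \<inter> ({lft j..rgt j} \<times> {hgt j}) = {})"

definition vseg :: "real \<Rightarrow> real \<Rightarrow> real \<Rightarrow> (real \<times> real) set" where
  "vseg x a b = {x} \<times> {min a b..max a b}"

definition bar_k_visible ::
  "nat \<Rightarrow> 'a set \<Rightarrow> ('a \<Rightarrow> real) \<Rightarrow> ('a \<Rightarrow> real) \<Rightarrow> ('a \<Rightarrow> real) \<Rightarrow> 'a \<Rightarrow> 'a \<Rightarrow> bool" where
  "bar_k_visible k V lft rgt hgt i j \<longleftrightarrow> i \<in> V \<and> j \<in> V \<and> i \<noteq> j \<and>
     (\<exists>x. x \<in> {lft i..rgt i} \<and> x \<in> {lft j..rgt j} \<and>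
        card {m \<in> V - {i, j}.
                vseg x (hgt i) (hgt j) \<inter> ({lft m..rgt m} \<times> {hgt m}) \<noteq> {}} \<le> k)"

definition triangle_free :: "'a set \<Rightarrow> ('a \<Rightarrow> 'a \<Rightarrow> bool) \<Rightarrow> bool" where
  "triangle_free V E \<longleftrightarrow>
     \<not> (\<exists>u\<in>V. \<exists>v\<in>V. \<exists>w\<in>V. E u v \<and> E v w \<and> E u w)"

definition is_path :: "'a set \<Rightarrow> ('a \<Rightarrow> 'a \<Rightarrow> bool) \<Rightarrow> 'a list \<Rightarrow> bool" where
  "is_path V E ps \<longleftrightarrow> ps \<noteq> [] \<and> set ps \<subseteq> V \<and> distinct ps \<and>
     (\<forall>i. Suc i < length ps \<longrightarrow> E (ps ! i) (ps ! Suc i))"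

definition is_cycle :: "'a set \<Rightarrow> ('a \<Rightarrow> 'a \<Rightarrow> bool) \<Rightarrow> 'a list \<Rightarrow> bool" where
  "is_cycle V E cs \<longleftrightarrow> length cs \<ge> 3 \<and> is_path V E cs \<and> E (last cs) (hd cs)"

definition connected_in :: "'a set \<Rightarrow> ('a \<Rightarrow> 'a \<Rightarrow> bool) \<Rightarrow> 'a \<Rightarrow> 'a \<Rightarrow> bool" where
  "connected_in V E u v \<longleftrightarrow> (\<lambda>a b. a \<in> V \<and> b \<in> V \<and> E a b)\<^sup>*\<^sup>* u v"

definition components :: "'a set \<Rightarrow> ('a \<Rightarrow> 'a \<Rightarrow> bool) \<Rightarrow> 'a set set" where
  "components V E = (\<lambda>v. {u \<in> V. connected_in V E v u}) ` V"

definition is_tree :: "'a set \<Rightarrow> ('a \<Rightarrow> 'a \<Rightarrow> bool) \<Rightarrow> bool" where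
  "is_tree C E \<longleftrightarrow> C \<noteq> {} \<and> (\<forall>u\<in>C. \<forall>v\<in>C. connected_in C E u v) \<and>
     \<not> (\<exists>cs. is_cycle C E cs)"

definition is_caterpillar :: "'a set \<Rightarrow> ('a \<Rightarrow> 'a \<Rightarrow> bool) \<Rightarrow> bool" where
  "is_caterpillar C E \<longleftrightarrow> is_tree C E \<and>
     (\<exists>ps. is_path C E ps \<and> (\<forall>v\<in>C. v \<in> set ps \<or> (\<exists>u\<in>set ps. E u v)))"

definition disjoint_union_of_caterpillars :: "'a set \<Rightarrow> ('a \<Rightarrow> 'a \<Rightarrow> bool) \<Rightarrow> bool" where
  "disjoint_union_of_caterpillars V E \<longleftrightarrow> (\<forall>C\<in>components V E. is_caterpillar C E)"

end

theory Submission
  imports Defs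
begin

lemma fin_min:
  fixes f :: "'b \<Rightarrow> real"
  assumes "finite T" "T \<noteq> {}"
  shows "\<exists>m\<in>T. \<forall>t\<in>T. f m \<le> f t"
proof -
  obtain y where "y \<in> f ` T" "\<not>(\<exists>z\<in>f ` T. z < y)" using ex_min_if_finite[of "f ` T"] assms by auto
  then show ?thesis by (auto simp: not_less)
qed

lemma walk_to_path:
  assumes "R\<^sup>*\<^sup>* u w"
  shows "\<exists>ps. ps \<noteq> [] \<and> hd ps = u \<and> last ps = w \<and> distinct ps \<and> successively R ps
      \<and> set ps \<subseteq> insert u {b. \<exists>a. R a b}"
  using assms
proof (induction rule: rtranclp_induct)
  case base
  show ?case by (rule exI[of _ "[u]"]) auto
next
  case (step y z)
  then obtain ps where ps: "ps \<noteq> []" "hd ps = u" "last ps = y" "distinct ps" "successively R ps"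
      "set ps \<subseteq> insert u {b. \<exists>a. R a b}" by blast
  show ?case
  proof (cases "z \<in> set ps")
    case True
    then obtain xs ys where d: "ps = xs @ z # ys" by (meson in_set_conv_decomp)
    have "successively R (xs @ [z])" using ps(5) unfolding d
      by (auto simp: successively_append_iff successively_Cons)
    moreover have "hd (xs @ [z]) = u" using ps(2) d by (cases xs) auto
    moreover have "distinct (xs @ [z])" using ps(4) d by auto
    moreover have "set (xs @ [z]) \<subseteq> insert u {b. \<exists>a. R a b}" using ps(6) d by auto
    ultimately show ?thesis by (intro exI[of _ "xs @ [z]"]) auto
  next
    case False
    have "successively R (ps @ [z])" using ps step.hyps(2)
      by (auto simp: successively_append_iff)
    moreover have "hd (ps @ [z]) = u" using ps by auto
    moreover have "distinct (ps @ [z])" using ps(4) False by auto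
    moreover have "set (ps @ [z]) \<subseteq> insert u {b. \<exists>a. R a b}" using ps(6) step.hyps(2) by auto
    ultimately show ?thesis by (intro exI[of _ "ps @ [z]"]) auto
  qed
qed

lemma cover:
  fixes l r :: "'a \<Rightarrow> real"
  assumes "ps \<noteq> []" "successively (\<lambda>a b. l a \<le> r b \<and> l b \<le> r a) ps"
    "\<forall>p\<in>set ps. l p \<le> r p" "l (hd ps) \<le> y" "y \<le> r (last ps)"
  shows "\<exists>p\<in>set ps. l p \<le> y \<and> y \<le> r p"
  using assms
proof (induction ps rule: induct_list012)
  case 1 then show ?case by simp
next
  case (2 x) then show ?case by auto
next
  case (3 a b rest)
  show ?case
  proof (cases "y \<le> r a")
    case True then show ?thesis using 3 by auto
  next
    case False
    then have "l b \<le> y" using 3(4) by (auto simp: successively_Cons)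
    then have "\<exists>p\<in>set (b # rest). l p \<le> y \<and> y \<le> r p"
      using 3 by (intro 3(2)) (auto simp: successively_Cons)
    then show ?thesis by auto
  qed
qed


definition "ply3 V (l::'a\<Rightarrow>real) r \<longleftrightarrow> (\<forall>a\<in>V. \<forall>b\<in>V. \<forall>c\<in>V. a \<noteq> b \<and> a \<noteq> c \<and> b \<noteq> c \<longrightarrow>
   \<not> (\<exists>x. l a \<le> x \<and> x \<le> r a \<and> l b \<le> x \<and> x \<le> r b \<and> l c \<le> x \<and> x \<le> r c))"

lemma no_cycle:
  fixes l r :: "'a \<Rightarrow> real" and V :: "'a set"
  defines "E \<equiv> \<lambda>i j. i \<in> V \<and> j \<in> V \<and> i \<noteq> j \<and> l i \<le> r j \<and> l j \<le> r i"
  assumes ply: "ply3 V l r" and lr: "\<forall>i\<in>V. l i \<le> r i" and CV: "C \<subseteq> V"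
    and cyc: "is_cycle C E cs"
  shows False
proof -
  define n where "n = length cs"
  have n3: "n \<ge> 3" and dis: "distinct cs" and sub: "set cs \<subseteq> C"
    and cons: "\<And>i. Suc i < n \<Longrightarrow> E (cs ! i) (cs ! Suc i)" and lh: "E (last cs) (hd cs)"
    using cyc unfolding is_cycle_def is_path_def n_def by auto
  have ne: "cs \<noteq> []" using n3 n_def by auto
  have adj: "\<And>i. i < n \<Longrightarrow> E (cs ! i) (cs ! (if Suc i < n then Suc i else 0))"
  proof -
    fix i assume "i < n"
    show "E (cs ! i) (cs ! (if Suc i < n then Suc i else 0))"
    proof (cases "Suc i < n")
      case True then show ?thesis using cons by simp
    next
      case False
      then have "i = n - 1" using \<open>i < n\<close> by simp
      then show ?thesis using lh ne False by (simp add: last_conv_nth hd_conv_nth n_def)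
    qed
  qed
  obtain p where p: "p \<in> {..<n}" "\<forall>t\<in>{..<n}. r (cs ! p) \<le> r (cs ! t)"
    using fin_min[of "{..<n}" "\<lambda>t. r (cs ! t)"] n3 by fastforce
  define nx where "nx = (if Suc p < n then Suc p else 0)"
  define pv where "pv = (if p = 0 then n - 1 else p - 1)"
  have pn: "p < n" using p by simp
  have nxn: "nx < n" and pvn: "pv < n" using pn n3 by (auto simp: nx_def pv_def)
  have d1: "nx \<noteq> p" "pv \<noteq> p" "nx \<noteq> pv" using pn n3 by (auto simp: nx_def pv_def)
  have e1: "E (cs ! p) (cs ! nx)" using adj[OF pn] nx_def by simp
  have "(if Suc pv < n then Suc pv else 0) = p" using pn n3 by (auto simp: pv_def)
  then have e2: "E (cs ! pv) (cs ! p)" using adj[OF pvn] by simp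
  have v: "cs ! p \<in> V" "cs ! nx \<in> V" "cs ! pv \<in> V" using e1 e2 E_def by auto
  have dd: "cs ! p \<noteq> cs ! nx" "cs ! p \<noteq> cs ! pv" "cs ! nx \<noteq> cs ! pv"
    using d1 dis pn nxn pvn n_def by (auto simp: nth_eq_iff_index_eq)
  have "r (cs ! p) \<le> r (cs ! nx)" "r (cs ! p) \<le> r (cs ! pv)" using p nxn pvn by auto
  then show False using ply v dd e1 e2 lr unfolding ply3_def E_def
    by (metis order.refl)
qed


lemma graph_cat:
  fixes l r :: "'a \<Rightarrow> real" and V :: "'a set"
  assumes fin: "finite V" and ply: "ply3 V l r" and lr: "\<forall>i\<in>V. l i \<le> r i"
  shows "disjoint_union_of_caterpillars V (\<lambda>i j. i \<in> V \<and> j \<in> V \<and> i \<noteq> j \<and> l i \<le> r j \<and> l j \<le> r i)"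
    (is "disjoint_union_of_caterpillars V ?E")
  unfolding disjoint_union_of_caterpillars_def components_def
proof
  fix C assume "C \<in> (\<lambda>v. {u \<in> V. connected_in V ?E v u}) ` V"
  then obtain v where vV: "v \<in> V" and Cdef: "C = {u \<in> V. connected_in V ?E v u}" by auto
  define RV where "RV = (\<lambda>a b. a \<in> V \<and> b \<in> V \<and> ?E a b)"
  define RC where "RC = (\<lambda>a b. a \<in> C \<and> b \<in> C \<and> ?E a b)"
  have Cm: "\<And>u. u \<in> C \<longleftrightarrow> u \<in> V \<and> RV\<^sup>*\<^sup>* v u" using Cdef unfolding connected_in_def RV_def by auto
  have CV: "C \<subseteq> V" using Cm by auto
  have sym: "symp RV" unfolding RV_def symp_def by auto
  have toC: "RV\<^sup>*\<^sup>* a b \<Longrightarrow> a \<in> C \<Longrightarrow> RC\<^sup>*\<^sup>* a b \<and> b \<in> C" for a b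
  proof (induction rule: rtranclp_induct)
    case base then show ?case by simp
  next
    case (step y z)
    then have "RC\<^sup>*\<^sup>* a y" "y \<in> C" by auto
    moreover have "RV\<^sup>*\<^sup>* v y" using Cm \<open>y \<in> C\<close> by blast
    moreover have "RV\<^sup>*\<^sup>* v z" using calculation(3) step.hyps(2) by (rule rtranclp.rtrancl_into_rtrancl)
    moreover have zV: "z \<in> V" using step.hyps(2) RV_def by blast
    ultimately have zC: "z \<in> C" using Cm by blast
    have "RC y z" using \<open>y \<in> C\<close> zC step.hyps(2) unfolding RC_def RV_def by blast
    then show ?case using \<open>RC\<^sup>*\<^sup>* a y\<close> zC by auto
  qed
  have conn: "\<forall>u\<in>C. \<forall>w\<in>C. connected_in C ?E u w"
  proof (intro ballI)
    fix u w assume "u \<in> C" "w \<in> C"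
    then have "RV\<^sup>*\<^sup>* v u" "RV\<^sup>*\<^sup>* v w" using Cm by auto
    then have "RV\<^sup>*\<^sup>* u v" using sym by (meson symp_rtranclp sympD)
    then have "RV\<^sup>*\<^sup>* u w" using \<open>RV\<^sup>*\<^sup>* v w\<close> by auto
    then have "RC\<^sup>*\<^sup>* u w" using toC \<open>u \<in> C\<close> by blast
    then show "connected_in C ?E u w" unfolding connected_in_def RC_def by simp
  qed
  have vC: "v \<in> C" using Cm vV by auto
  have tree: "is_tree C ?E"
    unfolding is_tree_def using vC conn no_cycle[OF ply lr CV] by blast
  have finC: "finite C" using CV fin finite_subset by auto
  obtain u0 where u0: "u0 \<in> C" "\<forall>t\<in>C. l u0 \<le> l t" using fin_min[OF finC, of l] vC by blast
  obtain w0 where w0: "w0 \<in> C" "\<forall>t\<in>C. - r w0 \<le> - r t" using fin_min[OF finC, of "\<lambda>t. - r t"] vC by blast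
  have "RC\<^sup>*\<^sup>* u0 w0" using conn u0 w0 unfolding connected_in_def RC_def by blast
  then obtain ps where ps: "ps \<noteq> []" "hd ps = u0" "last ps = w0" "distinct ps" "successively RC ps"
      "set ps \<subseteq> insert u0 {b. \<exists>a. RC a b}" using walk_to_path[OF \<open>RC\<^sup>*\<^sup>* u0 w0\<close>] by blast
  have psC: "set ps \<subseteq> C" using ps(6) u0 unfolding RC_def by auto
  have "\<forall>i. Suc i < length ps \<longrightarrow> ?E (ps ! i) (ps ! Suc i)"
    using successively_nth[OF ps(5)] unfolding RC_def by blast
  then have path: "is_path C ?E ps" unfolding is_path_def using ps psC by blast
  have succ: "successively (\<lambda>a b. l a \<le> r b \<and> l b \<le> r a) ps"
    using ps(5) unfolding RC_def by (rule successively_mono) auto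
  have dom: "\<forall>x\<in>C. x \<in> set ps \<or> (\<exists>u\<in>set ps. ?E u x)"
  proof
    fix x assume xC: "x \<in> C"
    have xV: "x \<in> V" using xC CV by auto
    have "l (hd ps) \<le> l x" using u0 xC ps(2) by simp
    moreover have "l x \<le> r x" using lr xV by simp
    moreover have "r x \<le> r w0" using w0 xC by force
    ultimately have h1: "l (hd ps) \<le> l x" "l x \<le> r (last ps)" using ps(3) by auto
    then obtain p where p: "p \<in> set ps" "l p \<le> l x" "l x \<le> r p"
      using cover[OF ps(1) succ _ h1] lr psC CV by blast
    show "x \<in> set ps \<or> (\<exists>u\<in>set ps. ?E u x)"
    proof (cases "p = x")
      case True then show ?thesis using p by simp
    next
      case False
      have pV: "p \<in> V" using p psC CV by auto
      have "l p \<le> r x" using p lr xV by force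
      then have "?E p x" using False p pV xV by simp
      then show ?thesis using p by blast
    qed
  qed
  show "is_caterpillar C ?E" unfolding is_caterpillar_def using tree path dom by blast
qed


lemma vseg_bar: "vseg x a b \<inter> ({l..r} \<times> {h}) \<noteq> {} \<longleftrightarrow> l \<le> x \<and> x \<le> r \<and> min a b \<le> h \<and> h \<le> max a b"
proof
  assume "vseg x a b \<inter> ({l..r} \<times> {h}) \<noteq> {}"
  then show "l \<le> x \<and> x \<le> r \<and> min a b \<le> h \<and> h \<le> max a b" by (auto simp: vseg_def)
next
  assume "l \<le> x \<and> x \<le> r \<and> min a b \<le> h \<and> h \<le> max a b"
  then have "(x, h) \<in> vseg x a b \<inter> ({l..r} \<times> {h})" by (auto simp: vseg_def)
  then show "vseg x a b \<inter> ({l..r} \<times> {h}) \<noteq> {}" by blast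
qed

lemma vis_intro:
  assumes br: "bar_rep V lft rgt hgt" and k: "k \<ge> 1" and ij: "i \<in> V" "j \<in> V" "i \<noteq> j"
    and x: "lft i \<le> x" "x \<le> rgt i" "lft j \<le> x" "x \<le> rgt j"
    and only: "\<forall>m\<in>V - {i, j}. lft m \<le> x \<and> x \<le> rgt m \<and> min (hgt i) (hgt j) \<le> hgt m
        \<and> hgt m \<le> max (hgt i) (hgt j) \<longrightarrow> m = b"
  shows "bar_k_visible k V lft rgt hgt i j"
proof -
  have "{m \<in> V - {i, j}. vseg x (hgt i) (hgt j) \<inter> ({lft m..rgt m} \<times> {hgt m}) \<noteq> {}} \<subseteq> {b}"
    using only by (auto simp: vseg_bar)
  then have "card {m \<in> V - {i, j}. vseg x (hgt i) (hgt j) \<inter> ({lft m..rgt m} \<times> {hgt m}) \<noteq> {}} \<le> card {b}"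
    by (rule card_mono[rotated]) simp
  then have "card {m \<in> V - {i, j}. vseg x (hgt i) (hgt j) \<inter> ({lft m..rgt m} \<times> {hgt m}) \<noteq> {}} \<le> 1"
    by simp
  then show ?thesis unfolding bar_k_visible_def using ij x k by auto
qed

lemma ply_of:
  assumes k: "k \<ge> 1" and br: "bar_rep V lft rgt hgt"
    and tf: "triangle_free V (bar_k_visible k V lft rgt hgt)"
  shows "ply3 V lft rgt"
  unfolding ply3_def
proof (intro ballI impI notI)
  fix a b c assume abc: "a \<in> V" "b \<in> V" "c \<in> V" "a \<noteq> b \<and> a \<noteq> c \<and> b \<noteq> c"
    and "\<exists>x. lft a \<le> x \<and> x \<le> rgt a \<and> lft b \<le> x \<and> x \<le> rgt b \<and> lft c \<le> x \<and> x \<le> rgt c"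
  then obtain x where x: "lft a \<le> x \<and> x \<le> rgt a" "lft b \<le> x \<and> x \<le> rgt b" "lft c \<le> x \<and> x \<le> rgt c"
    by blast
  define S where "S = {m \<in> V. lft m \<le> x \<and> x \<le> rgt m}"
  have fin: "finite V" using br bar_rep_def by auto
  have finS: "finite S" using fin S_def by auto
  have abcS: "a \<in> S" "b \<in> S" "c \<in> S" using abc x S_def by auto
  have inj: "\<And>m m'. m \<in> S \<Longrightarrow> m' \<in> S \<Longrightarrow> m \<noteq> m' \<Longrightarrow> hgt m \<noteq> hgt m'"
  proof
    fix m m' assume "m \<in> S" "m' \<in> S" "m \<noteq> m'" "hgt m = hgt m'"
    then have "(x, hgt m) \<in> ({lft m..rgt m} \<times> {hgt m}) \<inter> ({lft m'..rgt m'} \<times> {hgt m'})"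
      using S_def by auto
    then show False using br \<open>m \<in> S\<close> \<open>m' \<in> S\<close> \<open>m \<noteq> m'\<close> unfolding bar_rep_def S_def by blast
  qed
  obtain a1 where a1: "a1 \<in> S" "\<forall>t\<in>S. hgt a1 \<le> hgt t" using fin_min[OF finS, of hgt] abcS by blast
  have "S - {a1} \<noteq> {}" using abcS abc by auto
  then obtain b1 where b1: "b1 \<in> S - {a1}" "\<forall>t\<in>S - {a1}. hgt b1 \<le> hgt t"
    using fin_min[of "S - {a1}" hgt] finS by blast
  have "S - {a1, b1} \<noteq> {}" using abcS abc by auto
  then obtain c1 where c1: "c1 \<in> S - {a1, b1}" "\<forall>t\<in>S - {a1, b1}. hgt c1 \<le> hgt t"
    using fin_min[of "S - {a1, b1}" hgt] finS by blast
  have ma: "hgt a1 < hgt m" if "m \<in> S" "m \<noteq> a1" for m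
  proof -
    have "hgt a1 \<le> hgt m" using a1 that by blast
    moreover have "hgt a1 \<noteq> hgt m" using inj[of a1 m] a1 that by blast
    ultimately show ?thesis by linarith
  qed
  have mb: "hgt b1 < hgt m" if "m \<in> S" "m \<noteq> a1" "m \<noteq> b1" for m
  proof -
    have "hgt b1 \<le> hgt m" using b1 that by blast
    moreover have "hgt b1 \<noteq> hgt m" using inj[of b1 m] b1 that by blast
    ultimately show ?thesis by linarith
  qed
  have mc: "hgt c1 < hgt m" if "m \<in> S" "m \<noteq> a1" "m \<noteq> b1" "m \<noteq> c1" for m
  proof -
    have "hgt c1 \<le> hgt m" using c1 that by blast
    moreover have "hgt c1 \<noteq> hgt m" using inj[of c1 m] c1 that by blast
    ultimately show ?thesis by linarith
  qed
  have ab: "hgt a1 < hgt b1" using ma b1 by auto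
  have bc: "hgt b1 < hgt c1" using mb c1 by auto
  have V1: "a1 \<in> V" "b1 \<in> V" "c1 \<in> V" and X1: "lft a1 \<le> x \<and> x \<le> rgt a1" "lft b1 \<le> x \<and> x \<le> rgt b1"
    "lft c1 \<le> x \<and> x \<le> rgt c1" using a1 b1 c1 S_def by auto
  have d: "a1 \<noteq> b1" "a1 \<noteq> c1" "b1 \<noteq> c1" using b1 c1 by auto
  have e1: "bar_k_visible k V lft rgt hgt a1 b1"
  proof (rule vis_intro[OF br k V1(1,2) d(1), where x=x and b=c1])
    show "\<forall>m\<in>V - {a1, b1}. lft m \<le> x \<and> x \<le> rgt m \<and> min (hgt a1) (hgt b1) \<le> hgt m
        \<and> hgt m \<le> max (hgt a1) (hgt b1) \<longrightarrow> m = c1"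
    proof (intro ballI impI)
      fix m assume "m \<in> V - {a1, b1}" "lft m \<le> x \<and> x \<le> rgt m \<and> min (hgt a1) (hgt b1) \<le> hgt m
        \<and> hgt m \<le> max (hgt a1) (hgt b1)"
      then show "m = c1" using mb[of m] ab S_def by auto
    qed
  qed (use X1 in auto)
  have e2: "bar_k_visible k V lft rgt hgt b1 c1"
  proof (rule vis_intro[OF br k V1(2,3) d(3), where x=x and b=a1])
    show "\<forall>m\<in>V - {b1, c1}. lft m \<le> x \<and> x \<le> rgt m \<and> min (hgt b1) (hgt c1) \<le> hgt m
        \<and> hgt m \<le> max (hgt b1) (hgt c1) \<longrightarrow> m = a1"
    proof (intro ballI impI)
      fix m assume "m \<in> V - {b1, c1}" "lft m \<le> x \<and> x \<le> rgt m \<and> min (hgt b1) (hgt c1) \<le> hgt m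
        \<and> hgt m \<le> max (hgt b1) (hgt c1)"
      then show "m = a1" using mc[of m] bc S_def by fastforce
    qed
  qed (use X1 in auto)
  have e3: "bar_k_visible k V lft rgt hgt a1 c1"
  proof (rule vis_intro[OF br k V1(1,3) d(2), where x=x and b=b1])
    show "\<forall>m\<in>V - {a1, c1}. lft m \<le> x \<and> x \<le> rgt m \<and> min (hgt a1) (hgt c1) \<le> hgt m
        \<and> hgt m \<le> max (hgt a1) (hgt c1) \<longrightarrow> m = b1"
    proof (intro ballI impI)
      fix m assume "m \<in> V - {a1, c1}" "lft m \<le> x \<and> x \<le> rgt m \<and> min (hgt a1) (hgt c1) \<le> hgt m
        \<and> hgt m \<le> max (hgt a1) (hgt c1)"
      then show "m = b1" using mc[of m] ab bc S_def by fastforce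
    qed
  qed (use X1 in auto)
  show False using tf e1 e2 e3 V1 unfolding triangle_free_def by blast
qed

lemma vis_eq:
  assumes k: "k \<ge> 1" and br: "bar_rep V lft rgt hgt" and ply: "ply3 V lft rgt"
  shows "bar_k_visible k V lft rgt hgt = (\<lambda>i j. i \<in> V \<and> j \<in> V \<and> i \<noteq> j \<and> lft i \<le> rgt j \<and> lft j \<le> rgt i)"
proof (intro ext iffI)
  fix i j assume "bar_k_visible k V lft rgt hgt i j"
  then show "i \<in> V \<and> j \<in> V \<and> i \<noteq> j \<and> lft i \<le> rgt j \<and> lft j \<le> rgt i"
    unfolding bar_k_visible_def by auto
next
  fix i j assume h: "i \<in> V \<and> j \<in> V \<and> i \<noteq> j \<and> lft i \<le> rgt j \<and> lft j \<le> rgt i"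
  define x where "x = max (lft i) (lft j)"
  have lr: "lft i < rgt i" "lft j < rgt j" using br h unfolding bar_rep_def by auto
  have x: "lft i \<le> x" "x \<le> rgt i" "lft j \<le> x" "x \<le> rgt j" using h lr x_def by auto
  have "{m \<in> V - {i, j}. vseg x (hgt i) (hgt j) \<inter> ({lft m..rgt m} \<times> {hgt m}) \<noteq> {}} = {}"
  proof (rule ccontr)
    assume "{m \<in> V - {i, j}. vseg x (hgt i) (hgt j) \<inter> ({lft m..rgt m} \<times> {hgt m}) \<noteq> {}} \<noteq> {}"
    then obtain m where m: "m \<in> V" "m \<noteq> i" "m \<noteq> j" "lft m \<le> x" "x \<le> rgt m"
      by (auto simp: vseg_bar)
    then show False using ply h x unfolding ply3_def by blast
  qed
  then have "card {m \<in> V - {i, j}. vseg x (hgt i) (hgt j) \<inter> ({lft m..rgt m} \<times> {hgt m}) \<noteq> {}} \<le> k"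
    by (simp only: card.empty)
  then show "bar_k_visible k V lft rgt hgt i j" unfolding bar_k_visible_def using h x by auto
qed

theorem mainTheorem12:
  fixes k :: nat and V :: "'a set" and lft rgt hgt :: "'a \<Rightarrow> real"
  assumes "k \<ge> 1"
    and "bar_rep V lft rgt hgt"
    and "triangle_free V (bar_k_visible k V lft rgt hgt)"
  shows "disjoint_union_of_caterpillars V (bar_k_visible k V lft rgt hgt)"
proof -
  have ply: "ply3 V lft rgt" using ply_of assms by blast
  have fin: "finite V" and lr: "\<forall>i\<in>V. lft i \<le> rgt i" using assms(2) unfolding bar_rep_def by auto
  show ?thesis unfolding vis_eq[OF assms(1,2) ply] by (rule graph_cat[OF fin ply lr])
qed

end
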